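(* Let $m,n$ be positive integers and $x\ge 2$ real. Define $\alpha_j\ge 0$ ($1\le j\le n$) and $\beta_k\ge0$ ($1\le k\le m$) by $$\cosh\alpha_j+\cos\frac{\pi(j-\frac12)}{n}=x=\cosh\beta_k+\cos\frac{\pi(k-\frac12)}{m}.$$ Then $$\prod_{j=1}^n 2\cosh(m\alpha_j)=\prod_{k=1}^m 2\cosh(n\beta_k).$$ *)

theory Defs
  imports "HOL-Analysis.Analysis"
begin

end

theory Submission
  imports Defs "HOL-Computational_Algebra.Polynomial"
begin

lemma cis_inj:
  assumes "N > 0" "j < N" "k < N" "cis (pi*(2*real j+1)/real N) = cis (pi*(2*real k+1)/real N)"
  shows "j = k"
proof -
  have e: "cis (pi*(2*real j+1)/real N) = cis (pi/real N) * exp(2 * of_real pi * \<i> * of_nat j / of_nat N)" for j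
  proof -
    have "\<i> * complex_of_real (pi*(2*real j+1)/real N) = \<i> * complex_of_real (pi/real N) + 2 * of_real pi * \<i> * of_nat j / of_nat N"
      using assms(1) by (simp add: field_simps)
    thus ?thesis by (simp add: cis_conv_exp exp_add[symmetric])
  qed
  have "cis (pi/real N) \<noteq> 0" by simp
  hence "exp(2 * of_real pi * \<i> * of_nat j / of_nat N) = exp(2 * of_real pi * \<i> * of_nat k / of_nat N)"
    using assms(4) unfolding e by simp
  hence "j mod N = k mod N" using complex_root_unity_eq[of N j k] assms(1) by simp
  thus ?thesis using assms by simp
qed

lemma roots_prod:
  assumes "N > 0" "even N"
  shows "(\<Prod>j<N. (z - cis (pi*(2*real j+1)/real N))) = z^N + 1"
proof -
  define \<zeta> where "\<zeta> j = cis (pi*(2*real j+1)/real N)" for j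
  define P where "P = (\<Prod>j<N. [:- \<zeta> j, 1:])"
  define Q :: "complex poly" where "Q = monom 1 N + 1"
  have root: "\<zeta> j ^ N = -1" for j
  proof -
    have "\<zeta> j ^ N = cis (pi*(2*real j+1))" using assms(1) unfolding \<zeta>_def by (subst Complex.DeMoivre) simp
    also have "\<dots> = cis (2*pi*real j + pi)" by (simp add: algebra_simps)
    also have "\<dots> = -1" by (simp add: cis_conv_exp exp_add distrib_left flip: exp_of_nat_mult) (simp add: exp_eq_polar)
    finally show ?thesis .
  qed
  have inj: "inj_on \<zeta> {..<N}" using cis_inj[OF assms(1)] by (auto simp: inj_on_def \<zeta>_def)
  have "P = Q"
  proof (rule poly_eqI_degree_lead_coeff[where n=N and A="\<zeta> ` {..<N}"])
    show "poly.coeff P N = poly.coeff Q N" unfolding P_def Q_def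
      using lead_coeff_prod[of "\<lambda>j. [:- \<zeta> j, 1:]" "{..<N}"] degree_prod_eq_sum_degree[of "{..<N}" "\<lambda>j. [:- \<zeta> j, 1:]"]
      using assms(1) by (simp add: coeff_monom)
    show "N \<le> card (\<zeta> ` {..<N})" using card_image[OF inj] by simp
    show "degree P \<le> N" unfolding P_def
      using degree_prod_eq_sum_degree[of "{..<N}" "\<lambda>j. [:- \<zeta> j, 1:]"] by simp
    show "degree Q \<le> N" unfolding Q_def by (simp add: degree_add_le degree_monom_le)
    show "poly P z = poly Q z" if "z \<in> \<zeta> ` {..<N}" for z
      using that root by (auto simp: P_def Q_def poly_prod poly_monom)
  qed
  hence "poly P z = poly Q z" by simp
  thus ?thesis by (simp add: P_def Q_def poly_prod poly_monom \<zeta>_def)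
qed

lemma pair_fact: "(complex_of_real w - cis t) * (complex_of_real w - cis (-t)) = complex_of_real (w^2 - 2*w*cos t + 1)"
  by (simp add: complex_eq_iff power2_eq_square algebra_simps sin_cos_squared_add3)

lemma key:
  assumes m: "m > 0"
  shows "2 * cosh (real m * a) = 2^m * (\<Prod>k=1..m. cosh a - cos (pi*(real k - 1/2)/real m))"
proof -
  define w where "w = exp a"
  have wpos: "w > 0" by (simp add: w_def)
  define \<theta> where "\<theta> j = pi*(real j + 1/2)/real m" for j :: nat
  define f where "f j = complex_of_real w - cis (pi*(2*real j+1)/real (2*m))" for j
  have f1: "f j = complex_of_real w - cis (\<theta> j)" for j
    unfolding f_def \<theta>_def using m by (simp add: field_simps)
  have f2: "f (2*m-1-j) = complex_of_real w - cis (- \<theta> j)" if "j < m" for j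
  proof -
    have "pi*(2*real (2*m-1-j)+1)/real (2*m) = - \<theta> j + 2 * pi"
      using that m by (simp add: \<theta>_def of_nat_diff field_simps)
    hence "cis (pi*(2*real (2*m-1-j)+1)/real (2*m)) = cis (- \<theta> j)"
      by (simp only: cis_mult[symmetric]) simp
    thus ?thesis by (simp add: f_def)
  qed
  have "complex_of_real w ^ (2*m) + 1 = (\<Prod>j<2*m. f j)"
    unfolding f_def using roots_prod[of "2*m" "complex_of_real w"] m by simp
  also have "\<dots> = (\<Prod>j<m. f j) * (\<Prod>j\<in>{m..<2*m}. f j)"
  proof -
    have "{..<2*m} = {..<m} \<union> {m..<2*m}" by auto
    hence "(\<Prod>j<2*m. f j) = (\<Prod>j\<in>{..<m} \<union> {m..<2*m}. f j)" by simp
    also have "\<dots> = (\<Prod>j<m. f j) * (\<Prod>j\<in>{m..<2*m}. f j)"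
      by (rule prod.union_disjoint) auto
    finally show ?thesis .
  qed
  also have "(\<Prod>j\<in>{m..<2*m}. f j) = (\<Prod>j<m. f (2*m-1-j))"
    by (rule prod.reindex_bij_witness[where i="\<lambda>j. 2*m-1-j" and j="\<lambda>j. 2*m-1-j"]) auto
  also have "(\<Prod>j<m. f j) * \<dots> = (\<Prod>j<m. f j * f (2*m-1-j))"
    by (simp add: prod.distrib)
  also have "\<dots> = (\<Prod>j<m. complex_of_real (2*w*(cosh a - cos (\<theta> j))))"
  proof (rule prod.cong[OF refl])
    fix j assume "j \<in> {..<m}"
    hence "f j * f (2*m-1-j) = complex_of_real (w^2 - 2*w*cos (\<theta> j) + 1)"
      using f1 f2 pair_fact by simp
    also have "w^2 - 2*w*cos (\<theta> j) + 1 = 2*w*(cosh a - cos (\<theta> j))"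
      using wpos by (simp add: w_def cosh_def field_simps power2_eq_square exp_minus)
    finally show "f j * f (2*m-1-j) = complex_of_real (2*w*(cosh a - cos (\<theta> j)))" .
  qed
  also have "\<dots> = complex_of_real ((2*w)^m * (\<Prod>j<m. cosh a - cos (\<theta> j)))"
    by (simp add: prod.distrib)
  finally have "w^(2*m) + 1 = (2*w)^m * (\<Prod>j<m. cosh a - cos (\<theta> j))"
    by (metis of_real_eq_iff of_real_add of_real_power of_real_1)
  moreover have "w^(2*m) + 1 = w^m * (2 * cosh (real m * a))"
    using wpos by (simp add: w_def cosh_def exp_minus field_simps power_mult_distrib mult_exp_exp
       flip: exp_of_nat_mult power_add mult_2)
  ultimately have "2 * cosh (real m * a) = 2^m * (\<Prod>j<m. cosh a - cos (\<theta> j))"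
    using wpos by (simp add: power_mult_distrib)
  also have "(\<Prod>j<m. cosh a - cos (\<theta> j)) = (\<Prod>k=1..m. cosh a - cos (pi*(real k - 1/2)/real m))"
    by (simp add: prod.atLeast1_atMost_eq \<theta>_def add.commute)
  finally show ?thesis .
qed

theorem mainTheorem10:
  fixes m n :: nat and x :: real
    and \<alpha> \<beta> :: "nat \<Rightarrow> real"
  assumes "m > 0" and "n > 0" and "x \<ge> 2"
    and "\<And>j. j \<in> {1..n} \<Longrightarrow> \<alpha> j \<ge> 0"
    and "\<And>j. j \<in> {1..n} \<Longrightarrow> cosh (\<alpha> j) + cos (pi * (real j - 1/2) / real n) = x"
    and "\<And>k. k \<in> {1..m} \<Longrightarrow> \<beta> k \<ge> 0"
    and "\<And>k. k \<in> {1..m} \<Longrightarrow> cosh (\<beta> k) + cos (pi * (real k - 1/2) / real m) = x"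
  shows "(\<Prod>j=1..n. 2 * cosh (real m * \<alpha> j)) = (\<Prod>k=1..m. 2 * cosh (real n * \<beta> k))"
proof -
  define c where "c j = cos (pi * (real j - 1/2) / real n)" for j
  define d where "d k = cos (pi * (real k - 1/2) / real m)" for k
  have "(\<Prod>j=1..n. 2 * cosh (real m * \<alpha> j)) = (\<Prod>j=1..n. 2^m * (\<Prod>k=1..m. x - c j - d k))"
  proof (rule prod.cong[OF refl])
    fix j assume j: "j \<in> {1..n}"
    have "cosh (\<alpha> j) = x - c j" using assms(5)[OF j] by (simp add: c_def)
    thus "2 * cosh (real m * \<alpha> j) = 2^m * (\<Prod>k=1..m. x - c j - d k)"
      using key[OF assms(1), of "\<alpha> j"] by (simp add: d_def)
  qed
  also have "\<dots> = (2^m)^n * (\<Prod>j=1..n. \<Prod>k=1..m. x - c j - d k)"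
    by (simp add: prod.distrib)
  also have "(\<Prod>j=1..n. \<Prod>k=1..m. x - c j - d k) = (\<Prod>k=1..m. \<Prod>j=1..n. x - d k - c j)"
    by (subst prod.swap) (simp add: algebra_simps)
  also have "((2::real)^m)^n = (2^n)^m" by (simp flip: power_mult add: mult.commute)
  also have "(2^n)^m * (\<Prod>k=1..m. \<Prod>j=1..n. x - d k - c j) = (\<Prod>k=1..m. 2^n * (\<Prod>j=1..n. x - d k - c j))"
    by (simp add: prod.distrib)
  also have "\<dots> = (\<Prod>k=1..m. 2 * cosh (real n * \<beta> k))"
  proof (rule prod.cong[OF refl])
    fix k assume k: "k \<in> {1..m}"
    have "cosh (\<beta> k) = x - d k" using assms(7)[OF k] by (simp add: d_def)
    thus "2^n * (\<Prod>j=1..n. x - d k - c j) = 2 * cosh (real n * \<beta> k)"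
      using key[OF assms(2), of "\<beta> k"] by (simp add: c_def)
  qed
  finally show ?thesis .
qed

end
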